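(* Let $d\ge 1$, $T>0$, $\alpha\ge 0$, and let $H:\mathbb{R}\to\mathbb{C}^{d\times d}$ be a continuously differentiable map such that $H(v)$ is Hermitian for every $v\in\mathbb{R}$ (so that $\partial_v H(v)$ is Hermitian as well). Let $u:[0,T]\to\mathbb{R}$ be a continuous control, and let $|\psi_i\rangle,|\psi_f\rangle\in\mathbb{C}^d$. Let $|\psi(t)\rangle$ and $|\chi(t)\rangle$ be the solutions on $[0,T]$ of $$ i\,\partial_t|\psi(t)\rangle = H(u(t))|\psi(t)\rangle,\quad |\psi(0)\rangle=|\psi_i\rangle, \qquad i\,\partial_t|\chi(t)\rangle = H(u(t))|\chi(t)\rangle,\quad |\chi(T)\rangle=|\psi_f\rangle .$$ Define the gradient of the figure of merit $\mathcal{J}[u]=\mathrm{Re}\,\langle\psi(T)|\psi_f\rangle-\frac{\alpha}{2}\int_0^T u(t)^2\,dt$ by $$\nabla\mathcal{J}[u](t) = -\alpha u(t) + \mathrm{Im}\,\langle\chi(t)|\partial_v H(u(t))|\psi(t)\rangle,\qquad t\in[0,T].$$ Let $N\in\mathbb{N}$, $0=t_0<t_1<\dots<t_N=T$, and for $n=0,\dots,N$ define the intermediate states $$|\varphi^u_n\rangle=\frac{T-t_n}{T}|\psi(t_n)\rangle+\frac{t_n}{T}|\chi(t_n)\rangle .$$ For $0\le n\le N-1$ set $\alpha_n=\frac{t_{n+1}-t_n}{T}\alpha$ and $\beta_n=\frac{T}{t_{n+1}-t_n}$, and let $|\psi_n(t)\rangle$, $|\chi_n(t)\rangle$ be the solutions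 on $[t_n,t_{n+1}]$ of $$ i\,\partial_t|\psi_n(t)\rangle = H(u(t))|\psi_n(t)\rangle,\ |\psi_n(t_n)\rangle=|\varphi^u_n\rangle,\qquad i\,\partial_t|\chi_n(t)\rangle = H(u(t))|\chi_n(t)\rangle,\ |\chi_n(t_{n+1})\rangle=|\varphi^u_{n+1}\rangle ,$$ and define the gradient of the sub-functional $\mathcal{J}_n[u_n,|\varphi^u\rangle]=-\frac12\big\||\psi_n(t_{n+1})\rangle-|\varphi^u_{n+1}\rangle\big\|^2-\frac{\alpha_n}{2}\int_{t_n}^{t_{n+1}}u_n(t)^2dt$ (with $u_n=u|_{[t_n,t_{n+1}]}$) by $$\nabla\mathcal{J}_n[u|_{[t_n,t_{n+1}]},|\varphi^u\rangle](t) = -\alpha_n u(t) + \mathrm{Im}\,\langle\chi_n(t)|\partial_v H(u(t))|\psi_n(t)\rangle,\qquad t\in[t_n,t_{n+1}].$$ Then for every $n\in\{0,\dots,N-1\}$ and every $t\in[t_n,t_{n+1}]$, $$\nabla\mathcal{J}[u](t)=\beta_n\,\nabla\mathcal{J}_n[u|_{[t_n,t_{n+1}]},|\varphi^u\rangle](t).$$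
   Context: Bra-ket notation: $\langle a|B|c\rangle$ denotes the Hermitian inner product of $|a\rangle$ with $B|c\rangle$ (antilinear in the first argument); $\|\cdot\|$ is the associated norm. $\partial_v H(v)$ denotes the derivative of $H$ with respect to its scalar argument $v$. All differential equations are linear ODEs in $\mathbb{C}^d$ with continuous coefficients, so their solutions exist and are unique on the stated intervals. *)

theory Defs
  imports "HOL-Analysis.Analysis"
begin

definition braket :: "complex^'d \<Rightarrow> complex^'d \<Rightarrow> complex" where
  "braket a b = (\<Sum>i\<in>UNIV. cnj (a $ i) * b $ i)"

definition hermitian_mat :: "complex^'d^'d \<Rightarrow> bool" where
  "hermitian_mat A \<longleftrightarrow> (\<forall>i j. A $ i $ j = cnj (A $ j $ i))"

definition grad_expr ::
  "real \<Rightarrow> (real \<Rightarrow> real) \<Rightarrow> (real \<Rightarrow> complex^'d^'d) \<Rightarrow> (real \<Rightarrow> complex^'d)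
   \<Rightarrow> (real \<Rightarrow> complex^'d) \<Rightarrow> real \<Rightarrow> real" where
  "grad_expr a u dH chi psi t = - a * u t + Im (braket (chi t) (dH (u t) *v psi t))"

end

theory Submission
  imports Defs
begin

lemma vd_nth: "(f has_vector_derivative f') F \<Longrightarrow> ((\<lambda>s. f s $ i) has_vector_derivative f' $ i) F"
  by (rule bounded_linear.has_vector_derivative[OF bounded_linear_vec_nth])

lemma mvm_scaleR: "(A :: complex^'n^'m) *v (r *\<^sub>R x) = r *\<^sub>R (A *v x)"
  unfolding scaleR_vec_def by (simp add: vec_eq_iff matrix_vector_mult_def scaleR_conv_of_real sum_distrib_left mult_ac)

lemma braket_cnj: "braket y x = cnj (braket x y)"
  unfolding braket_def by (simp add: mult.commute)

lemma braket_smult_left: "braket (c *s x) y = cnj c * braket x y"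
  unfolding braket_def by (simp add: sum_distrib_left mult_ac)

lemma braket_smult_right: "braket x (c *s y) = c * braket x y"
  unfolding braket_def by (simp add: sum_distrib_left mult_ac)

lemma scaleR_smult: "r *\<^sub>R (x::complex^'n) = complex_of_real r *s x"
  unfolding scaleR_vec_def vector_scalar_mult_def by (simp add: scaleR_conv_of_real)

lemma braket_scaleR_left: "braket (r *\<^sub>R x) y = of_real r * braket x y"
  unfolding scaleR_smult braket_smult_left by simp

lemma braket_scaleR_right: "braket x (r *\<^sub>R y) = of_real r * braket x y"
  unfolding scaleR_smult braket_smult_right by simp

lemma braket_add_left: "braket (x + z) y = braket x y + braket z y"
  unfolding braket_def by (simp add: sum.distrib algebra_simps)

lemma braket_add_right: "braket x (y + z) = braket x y + braket x z"
  unfolding braket_def by (simp add: sum.distrib algebra_simps)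

lemma herm_adj:
  assumes "hermitian_mat A"
  shows "braket (A *v x) y = braket x (A *v y)"
proof -
  have "braket (A *v x) y = (\<Sum>i\<in>UNIV. \<Sum>j\<in>UNIV. cnj (A $ i $ j) * cnj (x $ j) * y $ i)"
    unfolding braket_def matrix_vector_mult_def by (simp add: sum_distrib_right)
  also have "\<dots> = (\<Sum>j\<in>UNIV. \<Sum>i\<in>UNIV. cnj (x $ j) * (A $ j $ i * y $ i))"
  proof -
    have h: "cnj (A $ i $ j) = A $ j $ i" for i j
    proof -
      have "A $ j $ i = cnj (A $ i $ j)" using assms unfolding hermitian_mat_def by blast
      thus ?thesis by simp
    qed
    show ?thesis by (subst sum.swap) (simp add: h mult_ac)
  qed
  also have "\<dots> = braket x (A *v y)"
    unfolding braket_def matrix_vector_mult_def by (simp add: sum_distrib_left)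
  finally show ?thesis .
qed

lemma braket_self_zero:
  assumes "braket x x = 0" shows "x = 0"
proof -
  have eq: "\<And>z. Re z * Re z + Im z * Im z = (cmod z)^2" by (subst cmod_power2) (simp add: power2_eq_square)
  have "Re (braket x x) = (\<Sum>i\<in>UNIV. (cmod (x $ i))^2)"
    unfolding braket_def by (simp add: eq del: norm_power)
  hence "(\<Sum>i\<in>UNIV. (cmod (x $ i))^2) = 0" using assms by simp
  hence "\<forall>i\<in>UNIV. (cmod (x $ i))^2 = 0"
    by (subst (asm) sum_nonneg_eq_0_iff) auto
  thus ?thesis by (simp add: vec_eq_iff)
qed

lemma braket_deriv:
  assumes "(e has_vector_derivative e') (at s within S)"
  shows "((\<lambda>s. braket (e s) (e s)) has_vector_derivative (braket e' (e s) + braket (e s) e')) (at s within S)"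
proof -
  have "((\<lambda>s. \<Sum>i\<in>UNIV. cnj (e s $ i) * e s $ i) has_vector_derivative
     (\<Sum>i\<in>UNIV. cnj (e s $ i) * e' $ i + cnj (e' $ i) * e s $ i)) (at s within S)"
    by (intro has_vector_derivative_sum has_vector_derivative_mult has_vector_derivative_cnj vd_nth assms)
  thus ?thesis unfolding braket_def by (simp add: sum.distrib add.commute)
qed

lemma ode_zero:
  fixes e :: "real \<Rightarrow> complex^'d"
  assumes ode: "\<And>s. s \<in> {a..b} \<Longrightarrow> (e has_vector_derivative ((- \<i>) *s (A s *v e s))) (at s within {a..b})"
    and herm: "\<And>s. hermitian_mat (A s)"
    and c: "c \<in> {a..b}" and ec: "e c = 0"
    and s: "s \<in> {a..b}"
  shows "e s = 0"
proof -
  have D: "\<And>s. s \<in> {a..b} \<Longrightarrow> ((\<lambda>s. braket (e s) (e s)) has_vector_derivative 0) (at s within {a..b})"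
  proof -
    fix s assume "s \<in> {a..b}"
    note d = braket_deriv[OF ode[OF this]]
    have eq: "braket ((- \<i>) *s (A s *v e s)) (e s) + braket (e s) ((- \<i>) *s (A s *v e s)) = 0"
      unfolding braket_smult_left braket_smult_right herm_adj[OF herm] by simp
    show "((\<lambda>s. braket (e s) (e s)) has_vector_derivative 0) (at s within {a..b})"
      using d unfolding eq .
  qed
  obtain k where k: "\<And>x. x \<in> {a..b} \<Longrightarrow> braket (e x) (e x) = k"
    using has_vector_derivative_zero_constant[OF convex_real_interval(5) D] by blast
  have "k = 0" using k[OF c] ec by (simp add: braket_def)
  thus ?thesis using k[OF s] braket_self_zero by blast
qed

lemma ode_lin:
  assumes "(f has_vector_derivative ((- \<i>) *s (A *v f s))) (at s within S)"
    and "(g has_vector_derivative ((- \<i>) *s (A *v g s))) (at s within S)"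
  shows "((\<lambda>s. r *\<^sub>R f s + q *\<^sub>R g s) has_vector_derivative ((- \<i>) *s (A *v (r *\<^sub>R f s + q *\<^sub>R g s)))) (at s within S)"
proof -
  have "((\<lambda>s. r *\<^sub>R f s + q *\<^sub>R g s) has_vector_derivative
     (r *\<^sub>R ((- \<i>) *s (A *v f s)) + q *\<^sub>R ((- \<i>) *s (A *v g s)))) (at s within S)"
    by (intro derivative_intros bounded_linear.has_vector_derivative[OF bounded_linear_scaleR_right] assms)
  moreover have "r *\<^sub>R ((- \<i>) *s (A *v f s)) + q *\<^sub>R ((- \<i>) *s (A *v g s))
     = (- \<i>) *s (A *v (r *\<^sub>R f s + q *\<^sub>R g s))"
    unfolding scaleR_vec_def by (simp add: vec_eq_iff vector_scalar_mult_def matrix_vector_mult_def scaleR_conv_of_real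
          sum_distrib_left sum.distrib algebra_simps)
  ultimately show ?thesis by simp
qed

lemma ode_diff:
  assumes "(f has_vector_derivative ((- \<i>) *s (A *v f s))) (at s within S)"
    and "(g has_vector_derivative ((- \<i>) *s (A *v g s))) (at s within S)"
  shows "((\<lambda>s. f s - g s) has_vector_derivative ((- \<i>) *s (A *v (f s - g s)))) (at s within S)"
proof -
  have "((\<lambda>s. f s - g s) has_vector_derivative ((- \<i>) *s (A *v f s) - (- \<i>) *s (A *v g s))) (at s within S)"
    by (intro derivative_intros assms)
  moreover have "(- \<i>) *s (A *v f s) - (- \<i>) *s (A *v g s) = (- \<i>) *s (A *v (f s - g s))"
    by (simp add: vec_eq_iff vector_scalar_mult_def matrix_vector_mult_def
          sum_subtractf ring_distribs)
  ultimately show ?thesis by simp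
qed

lemma herm_deriv:
  assumes "\<And>v. (H has_vector_derivative dH v) (at v)" "\<And>v. hermitian_mat (H v)"
  shows "hermitian_mat (dH v)"
  unfolding hermitian_mat_def
proof (intro allI)
  fix i j
  have 1: "((\<lambda>v. H v $ i $ j) has_vector_derivative dH v $ i $ j) (at v)"
    by (intro vd_nth assms)
  have 2: "((\<lambda>v. cnj (H v $ j $ i)) has_vector_derivative cnj (dH v $ j $ i)) (at v)"
    by (intro has_vector_derivative_cnj vd_nth assms)
  have eq: "(\<lambda>v. cnj (H v $ j $ i)) = (\<lambda>v. H v $ i $ j)"
  proof
    fix v
    have "H v $ i $ j = cnj (H v $ j $ i)" using assms(2)[of v] unfolding hermitian_mat_def by blast
    thus "cnj (H v $ j $ i) = H v $ i $ j" by simp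
  qed
  have 3: "((\<lambda>v. H v $ i $ j) has_vector_derivative cnj (dH v $ j $ i)) (at v)"
    using 2 unfolding eq .
  show "dH v $ i $ j = cnj (dH v $ j $ i)"
    by (rule vector_derivative_unique_at[OF 1 3])
qed

theorem theorem2:
  fixes H dH :: "real \<Rightarrow> complex^'d^'d"
    and T \<alpha> :: real
    and u :: "real \<Rightarrow> real"
    and psi_i psi_f :: "complex^'d"
    and psi chi :: "real \<Rightarrow> complex^'d"
    and N :: nat and tt :: "nat \<Rightarrow> real"
    and phi :: "nat \<Rightarrow> complex^'d"
    and psin chin :: "nat \<Rightarrow> real \<Rightarrow> complex^'d"
  assumes T_pos: "T > 0"
    and alpha_nn: "\<alpha> \<ge> 0"
    and H_deriv: "\<And>v. (H has_vector_derivative dH v) (at v)"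
    and dH_cont: "continuous_on UNIV dH"
    and H_herm: "\<And>v. hermitian_mat (H v)"
    and u_cont: "continuous_on {0..T} u"
    and psi_ode: "\<And>s. s \<in> {0..T} \<Longrightarrow>
        (psi has_vector_derivative ((- \<i>) *s (H (u s) *v psi s))) (at s within {0..T})"
    and psi_init: "psi 0 = psi_i"
    and chi_ode: "\<And>s. s \<in> {0..T} \<Longrightarrow>
        (chi has_vector_derivative ((- \<i>) *s (H (u s) *v chi s))) (at s within {0..T})"
    and chi_final: "chi T = psi_f"
    and t0: "tt 0 = 0" and tN: "tt N = T"
    and t_incr: "\<And>n. n < N \<Longrightarrow> tt n < tt (Suc n)"
    and phi_def: "\<And>n. n \<le> N \<Longrightarrow>
        phi n = ((T - tt n) / T) *\<^sub>R psi (tt n) + (tt n / T) *\<^sub>R chi (tt n)"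
    and psin_ode: "\<And>n s. n < N \<Longrightarrow> s \<in> {tt n..tt (Suc n)} \<Longrightarrow>
        (psin n has_vector_derivative ((- \<i>) *s (H (u s) *v psin n s))) (at s within {tt n..tt (Suc n)})"
    and psin_init: "\<And>n. n < N \<Longrightarrow> psin n (tt n) = phi n"
    and chin_ode: "\<And>n s. n < N \<Longrightarrow> s \<in> {tt n..tt (Suc n)} \<Longrightarrow>
        (chin n has_vector_derivative ((- \<i>) *s (H (u s) *v chin n s))) (at s within {tt n..tt (Suc n)})"
    and chin_final: "\<And>n. n < N \<Longrightarrow> chin n (tt (Suc n)) = phi (Suc n)"
  shows "\<forall>n < N. \<forall>s \<in> {tt n..tt (Suc n)}.
           grad_expr \<alpha> u dH chi psi s =
           (T / (tt (Suc n) - tt n)) *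
             grad_expr (((tt (Suc n) - tt n) / T) * \<alpha>) u dH (chin n) (psin n) s"
  proof (intro allI impI ballI)
  fix n s assume n: "n < N" and s: "s \<in> {tt n..tt (Suc n)}"
  let ?I = "{tt n..tt (Suc n)}"
  have mono: "tt m \<le> tt k" if "m \<le> k" "k \<le> N" for m k
    using that
  proof (induction k)
    case 0 thus ?case by simp
  next
    case (Suc k)
    show ?case
    proof (cases "m = Suc k")
      case True thus ?thesis by simp
    next
      case False
      with Suc.prems have "m \<le> k" "k < N" by auto
      with Suc.IH t_incr[of k] show ?thesis by force
    qed
  qed
  have sub: "?I \<subseteq> {0..T}" using mono[of 0 n] mono[of "Suc n" N] n t0 tN by auto
  have psiI: "\<And>s. s \<in> ?I \<Longrightarrow> (psi has_vector_derivative ((- \<i>) *s (H (u s) *v psi s))) (at s within ?I)"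
    using psi_ode sub has_vector_derivative_within_subset by blast
  have chiI: "\<And>s. s \<in> ?I \<Longrightarrow> (chi has_vector_derivative ((- \<i>) *s (H (u s) *v chi s))) (at s within ?I)"
    using chi_ode sub has_vector_derivative_within_subset by blast
  have le: "tt n \<le> tt (Suc n)" using t_incr[OF n] by simp
  have P: "psin n s = ((T - tt n) / T) *\<^sub>R psi s + (tt n / T) *\<^sub>R chi s"
  proof -
    let ?e = "\<lambda>s. psin n s - (((T - tt n) / T) *\<^sub>R psi s + (tt n / T) *\<^sub>R chi s)"
    have "?e s = 0"
    proof (rule ode_zero[of "tt n" "tt (Suc n)" ?e "\<lambda>s. H (u s)" "tt n" s])
      fix s assume "s \<in> ?I"
      thus "(?e has_vector_derivative ((- \<i>) *s (H (u s) *v ?e s))) (at s within ?I)"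
        by (intro ode_diff psin_ode[OF n] ode_lin psiI chiI)
    next
      show "?e (tt n) = 0" using psin_init[OF n] phi_def[of n] n by simp
    qed (use H_herm le s in auto)
    thus ?thesis by simp
  qed
  have C: "chin n s = ((T - tt (Suc n)) / T) *\<^sub>R psi s + (tt (Suc n) / T) *\<^sub>R chi s"
  proof -
    let ?e = "\<lambda>s. chin n s - (((T - tt (Suc n)) / T) *\<^sub>R psi s + (tt (Suc n) / T) *\<^sub>R chi s)"
    have "?e s = 0"
    proof (rule ode_zero[of "tt n" "tt (Suc n)" ?e "\<lambda>s. H (u s)" "tt (Suc n)" s])
      fix s assume "s \<in> ?I"
      thus "(?e has_vector_derivative ((- \<i>) *s (H (u s) *v ?e s))) (at s within ?I)"
        by (intro ode_diff chin_ode[OF n] ode_lin psiI chiI)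
    next
      show "?e (tt (Suc n)) = 0" using chin_final[OF n] phi_def[of "Suc n"] n by simp
    qed (use H_herm le s in auto)
    thus ?thesis by simp
  qed
  have hd: "hermitian_mat (dH (u s))" by (rule herm_deriv[OF H_deriv H_herm])
  have imz: "Im z = 0" if "z = cnj z" for z
  proof -
    have "Im z = Im (cnj z)" using that by simp
    thus ?thesis by simp
  qed
  have i1: "Im (braket x (dH (u s) *v x)) = 0" for x
  proof (rule imz)
    have "braket x (dH (u s) *v x) = braket (dH (u s) *v x) x" by (rule herm_adj[OF hd, symmetric])
    also have "\<dots> = cnj (braket x (dH (u s) *v x))" by (rule braket_cnj)
    finally show "braket x (dH (u s) *v x) = cnj (braket x (dH (u s) *v x))" .
  qed
  have i2: "Im (braket (psi s) (dH (u s) *v chi s)) = - Im (braket (chi s) (dH (u s) *v psi s))"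
  proof -
    have "braket (psi s) (dH (u s) *v chi s) = cnj (braket (chi s) (dH (u s) *v psi s))"
      using herm_adj[OF hd, of "psi s" "chi s"] braket_cnj[of "dH (u s) *v psi s" "chi s"] by simp
    thus ?thesis by simp
  qed
  define a where "a = (T - tt n) / T"
  define b where "b = tt n / T"
  define a' where "a' = (T - tt (Suc n)) / T"
  define b' where "b' = tt (Suc n) / T"
  define D where "D = dH (u s)"
  define X where "X = Im (braket (chi s) (D *v psi s))"
  have exp: "braket (a' *\<^sub>R psi s + b' *\<^sub>R chi s) (D *v (a *\<^sub>R psi s + b *\<^sub>R chi s)) =
     of_real (a' * a) * braket (psi s) (D *v psi s) + of_real (a' * b) * braket (psi s) (D *v chi s)
     + of_real (b' * a) * braket (chi s) (D *v psi s) + of_real (b' * b) * braket (chi s) (D *v chi s)"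
    by (simp add: matrix_vector_right_distrib mvm_scaleR braket_add_left braket_add_right
        braket_scaleR_left braket_scaleR_right algebra_simps)
  have "Im (braket (chin n s) (D *v psin n s)) = (b' * a - a' * b) * X"
    unfolding P C a_def[symmetric] b_def[symmetric] a'_def[symmetric] b'_def[symmetric] exp
    using i1[of "psi s"] i1[of "chi s"] i2 unfolding D_def[symmetric]
    by (simp add: algebra_simps X_def)
  moreover have "b' * a - a' * b = (tt (Suc n) - tt n) / T"
    unfolding a_def b_def a'_def b'_def using T_pos by (simp add: field_simps)
  ultimately have key: "Im (braket (chin n s) (D *v psin n s)) = ((tt (Suc n) - tt n) / T) * X" by simp
  have Tne: "T \<noteq> 0" and dne: "tt (Suc n) - tt n \<noteq> 0" using T_pos t_incr[OF n] by auto
  show "grad_expr \<alpha> u dH chi psi s =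
           (T / (tt (Suc n) - tt n)) *
             grad_expr (((tt (Suc n) - tt n) / T) * \<alpha>) u dH (chin n) (psin n) s"
    unfolding grad_expr_def D_def[symmetric] key X_def[symmetric]
    using Tne dne by (simp add: field_simps)
qed

end
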